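(* Let $\mathcal{P}(3^3)$ be the graph whose vertices are the partitions of $\{1,\ldots,9\}$ into three cells each of size three, two such partitions being adjacent if and only if each cell of one partition contains exactly one point from each cell of the other. Let $S$ be an independent set of size $70$ in $\mathcal{P}(3^3)$. If $\pi\in S$, then there are $36$ partitions $\sigma\in S$ such that the meet $\pi\wedge\sigma$ has $7$ cells, a further $18$ such that $\pi\wedge\sigma$ has $6$ cells, and $15$ such that $\pi\wedge\sigma$ has $5$ cells.
   Context: The meet $\pi\wedge\sigma$ of two partitions is the partition whose cells are the nonempty intersections of a cell of $\pi$ with a cell of $\sigma$. *)

theory Defs
  imports Main
begin

definition is_partition :: "'a set \<Rightarrow> 'a set set \<Rightarrow> bool" where
  "is_partition X P \<longleftrightarrow> (\<Union>P = X) \<and> (\<forall>c\<in>P. c \<noteq> {}) \<and>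
     (\<forall>c\<in>P. \<forall>d\<in>P. c \<noteq> d \<longrightarrow> c \<inter> d = {})"

definition P33 :: "nat set set set" where
  "P33 = {P. is_partition {1..9} P \<and> card P = 3 \<and> (\<forall>c\<in>P. card c = 3)}"

definition adj33 :: "nat set set \<Rightarrow> nat set set \<Rightarrow> bool" where
  "adj33 P Q \<longleftrightarrow> (\<forall>c\<in>P. \<forall>d\<in>Q. card (c \<inter> d) = 1) \<and> (\<forall>d\<in>Q. \<forall>c\<in>P. card (d \<inter> c) = 1)"

definition independent33 :: "nat set set set \<Rightarrow> bool" where
  "independent33 S \<longleftrightarrow> S \<subseteq> P33 \<and> (\<forall>P\<in>S. \<forall>Q\<in>S. \<not> adj33 P Q)"

definition meet :: "'a set set \<Rightarrow> 'a set set \<Rightarrow> 'a set set" where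
  "meet P Q = {c \<inter> d | c d. c \<in> P \<and> d \<in> Q \<and> c \<inter> d \<noteq> {}}"

end

theory Submission imports Defs begin

fun choose2 :: "nat list \<Rightarrow> nat list list" where
 "choose2 [] = []" | "choose2 (a#r) = map (\<lambda>b. [a,b]) r @ choose2 r"

function parts :: "nat list \<Rightarrow> nat list list list" where
 "parts [] = [[]]" |
 "parts (m#r) = concat (map (\<lambda>s. map (\<lambda>p. (m#s)#p) (parts (filter (\<lambda>x. x \<notin> set s) r))) (choose2 r))"
by pat_completeness auto
termination by (relation "measure length") (auto simp: le_imp_less_Suc length_filter_le)

definition part_of :: "nat list list \<Rightarrow> nat set set" where
 "part_of p = set ` set p"
definition idx :: "nat list list \<Rightarrow> nat \<Rightarrow> nat" where
 "idx p x = length (takeWhile (\<lambda>c. x \<notin> set c) p)"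
definition lab :: "nat list list \<Rightarrow> nat list" where
 "lab p = map (idx p) [1..<10]"
definition meetV :: "nat list \<Rightarrow> nat list \<Rightarrow> nat" where
 "meetV l m = length (remdups (map2 (\<lambda>a b. 3*a+b) l m))"
definition validL :: "nat list list \<Rightarrow> bool" where
 "validL p \<longleftrightarrow> length p = 3 \<and> (\<forall>c\<in>set p. length c = 3) \<and> distinct (concat p) \<and> set (concat p) = set [1..<10]"
definition L :: "nat list list list" where "L = parts [1..<10]"
definition pi0 :: "nat list list" where "pi0 = [[1,2,3],[4,5,6],[7,8,9]]"
definition cntV :: "nat list list \<Rightarrow> nat list \<Rightarrow> nat" where
 "cntV W l = length (filter (\<lambda>w. meetV w l = 9) W)"

fun lexlt :: "nat list \<Rightarrow> nat list \<Rightarrow> bool" where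
 "lexlt [] (b#bs) = True" | "lexlt (a#as) (b#bs) = (a < b \<or> (a = b \<and> lexlt as bs))" | "lexlt _ _ = False"
definition keyL :: "nat list list \<Rightarrow> nat list" where
 "keyL p = concat (map (\<lambda>x. sort (p ! idx p x)) [1..<10])"

definition N0 :: "nat list list list" where "N0 = [[[1,4,7], [2,5,8], [3,6,9]], [[1,4,7], [2,5,9], [3,6,8]], [[1,4,7], [2,6,8], [3,5,9]], [[1,4,7], [2,6,9], [3,5,8]], [[1,4,8], [2,5,7], [3,6,9]], [[1,4,8], [2,5,9], [3,6,7]], [[1,4,8], [2,6,7], [3,5,9]], [[1,4,8], [2,6,9], [3,5,7]], [[1,4,9], [2,5,7], [3,6,8]], [[1,4,9], [2,5,8], [3,6,7]], [[1,4,9], [2,6,7], [3,5,8]], [[1,4,9], [2,6,8], [3,5,7]], [[1,5,7], [2,4,8], [3,6,9]], [[1,5,7], [2,4,9], [3,6,8]], [[1,5,7], [2,6,8], [3,4,9]], [[1,5,7], [2,6,9], [3,4,8]], [[1,5,8], [2,4,7], [3,6,9]], [[1,5,8], [2,4,9], [3,6,7]], [[1,5,8], [2,6,7], [3,4,9]], [[1,5,8], [2,6,9], [3,4,7]], [[1,5,9], [2,4,7], [3,6,8]], [[1,5,9], [2,4,8], [3,6,7]], [[1,5,9], [2,6,7], [3,4,8]], [[1,5,9], [2,6,8], [3,4,7]], [[1,6,7], [2,4,8], [3,5,9]], [[1,6,7], [2,4,9], [3,5,8]], [[1,6,7], [2,5,8], [3,4,9]], [[1,6,7], [2,5,9], [3,4,8]],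 [[1,6,8], [2,4,7], [3,5,9]], [[1,6,8], [2,4,9], [3,5,7]], [[1,6,8], [2,5,7], [3,4,9]], [[1,6,8], [2,5,9], [3,4,7]], [[1,6,9], [2,4,7], [3,5,8]], [[1,6,9], [2,4,8], [3,5,7]], [[1,6,9], [2,5,7], [3,4,8]], [[1,6,9], [2,5,8], [3,4,7]]]"
definition N0V :: "nat list list" where "N0V = [[0,1,2,0,1,2,0,1,2], [0,1,2,0,1,2,0,2,1], [0,1,2,0,2,1,0,1,2], [0,1,2,0,2,1,0,2,1], [0,1,2,0,1,2,1,0,2], [0,1,2,0,1,2,2,0,1], [0,1,2,0,2,1,1,0,2], [0,1,2,0,2,1,2,0,1], [0,1,2,0,1,2,1,2,0], [0,1,2,0,1,2,2,1,0], [0,1,2,0,2,1,1,2,0], [0,1,2,0,2,1,2,1,0], [0,1,2,1,0,2,0,1,2], [0,1,2,1,0,2,0,2,1], [0,1,2,2,0,1,0,1,2], [0,1,2,2,0,1,0,2,1], [0,1,2,1,0,2,1,0,2], [0,1,2,1,0,2,2,0,1], [0,1,2,2,0,1,1,0,2], [0,1,2,2,0,1,2,0,1], [0,1,2,1,0,2,1,2,0], [0,1,2,1,0,2,2,1,0], [0,1,2,2,0,1,1,2,0], [0,1,2,2,0,1,2,1,0], [0,1,2,1,2,0,0,1,2], [0,1,2,1,2,0,0,2,1], [0,1,2,2,1,0,0,1,2], [0,1,2,2,1,0,0,2,1], [0,1,2,1,2,0,1,0,2], [0,1,2,1,2,0,2,0,1], [0,1,2,2,1,0,1,0,2], [0,1,2,2,1,0,2,0,1],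 [0,1,2,1,2,0,1,2,0], [0,1,2,1,2,0,2,1,0], [0,1,2,2,1,0,1,2,0], [0,1,2,2,1,0,2,1,0]]"
definition T5 :: "nat list list list" where "T5 = [[[1,2,3], [4,5,7], [6,8,9]], [[1,2,3], [4,5,8], [6,7,9]], [[1,2,3], [4,5,9], [6,7,8]], [[1,2,3], [4,6,7], [5,8,9]], [[1,2,3], [4,6,8], [5,7,9]], [[1,2,3], [4,6,9], [5,7,8]], [[1,2,3], [4,7,8], [5,6,9]], [[1,2,3], [4,7,9], [5,6,8]], [[1,2,3], [4,8,9], [5,6,7]], [[1,2,4], [3,5,6], [7,8,9]], [[1,2,5], [3,4,6], [7,8,9]], [[1,2,6], [3,4,5], [7,8,9]], [[1,2,7], [3,8,9], [4,5,6]], [[1,2,8], [3,7,9], [4,5,6]], [[1,2,9], [3,7,8], [4,5,6]], [[1,3,4], [2,5,6], [7,8,9]], [[1,3,5], [2,4,6], [7,8,9]], [[1,3,6], [2,4,5], [7,8,9]], [[1,3,7], [2,8,9], [4,5,6]], [[1,3,8], [2,7,9], [4,5,6]], [[1,3,9], [2,7,8], [4,5,6]], [[1,4,5], [2,3,6], [7,8,9]], [[1,4,6], [2,3,5], [7,8,9]], [[1,5,6], [2,3,4], [7,8,9]], [[1,7,8], [2,3,9], [4,5,6]], [[1,7,9], [2,3,8], [4,5,6]], [[1,8,9], [2,3,7], [4,5,6]]]"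
definition T5V :: "nat list list" where "T5V = [[0,0,0,1,1,2,1,2,2], [0,0,0,1,1,2,2,1,2], [0,0,0,1,1,2,2,2,1], [0,0,0,1,2,1,1,2,2], [0,0,0,1,2,1,2,1,2], [0,0,0,1,2,1,2,2,1], [0,0,0,1,2,2,1,1,2], [0,0,0,1,2,2,1,2,1], [0,0,0,1,2,2,2,1,1], [0,0,1,0,1,1,2,2,2], [0,0,1,1,0,1,2,2,2], [0,0,1,1,1,0,2,2,2], [0,0,1,2,2,2,0,1,1], [0,0,1,2,2,2,1,0,1], [0,0,1,2,2,2,1,1,0], [0,1,0,0,1,1,2,2,2], [0,1,0,1,0,1,2,2,2], [0,1,0,1,1,0,2,2,2], [0,1,0,2,2,2,0,1,1], [0,1,0,2,2,2,1,0,1], [0,1,0,2,2,2,1,1,0], [0,1,1,0,0,1,2,2,2], [0,1,1,0,1,0,2,2,2], [0,1,1,1,0,0,2,2,2], [0,1,1,2,2,2,0,0,1], [0,1,1,2,2,2,0,1,0], [0,1,1,2,2,2,1,0,0]]"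
definition G :: "nat list list list list" where "G = [[[[1,4,7], [2,5,8], [3,6,9]], [[1,5,9], [2,6,7], [3,4,8]], [[1,6,8], [2,4,9], [3,5,7]]], [[[1,4,7], [2,5,9], [3,6,8]], [[1,5,8], [2,6,7], [3,4,9]], [[1,6,9], [2,4,8], [3,5,7]]], [[[1,4,7], [2,6,8], [3,5,9]], [[1,5,8], [2,4,9], [3,6,7]], [[1,6,9], [2,5,7], [3,4,8]]], [[[1,4,7], [2,6,9], [3,5,8]], [[1,5,9], [2,4,8], [3,6,7]], [[1,6,8], [2,5,7], [3,4,9]]], [[[1,4,8], [2,5,7], [3,6,9]], [[1,5,9], [2,6,8], [3,4,7]], [[1,6,7], [2,4,9], [3,5,8]]], [[[1,4,8], [2,5,9], [3,6,7]], [[1,5,7], [2,6,8], [3,4,9]], [[1,6,9], [2,4,7], [3,5,8]]], [[[1,4,8], [2,6,7], [3,5,9]], [[1,5,7], [2,4,9], [3,6,8]], [[1,6,9], [2,5,8], [3,4,7]]], [[[1,4,8], [2,6,9], [3,5,7]], [[1,5,9], [2,4,7], [3,6,8]], [[1,6,7], [2,5,8], [3,4,9]]], [[[1,4,9], [2,5,7], [3,6,8]], [[1,5,8], [2,6,9], [3,4,7]], [[1,6,7], [2,4,8], [3,5,9]]], [[[1,4,9], [2,5,8], [3,6,7]], [[1,5,7], [2,6,9], [3,4,8]], [[1,6,8], [2,4,7], [3,5,9]]], [[[1,4,9], [2,6,7], [3,5,8]], [[1,5,7], [2,4,8], [3,6,9]], [[1,6,8], [2,5,9], [3,4,7]]],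 [[[1,4,9], [2,6,8], [3,5,7]], [[1,5,8], [2,4,7], [3,6,9]], [[1,6,7], [2,5,9], [3,4,8]]]]"

lemma C0: "validL pi0" "meetV (lab pi0) (lab pi0) = 3" by code_simp+
lemma C1: "\<forall>p\<in>set L. validL p" by code_simp
lemma C2: "successively lexlt (map keyL L)" by code_simp
lemma C3a: "N0 = filter (\<lambda>q. meetV (lab pi0) (lab q) = 9) L" by code_simp
lemma C3b: "T5 = filter (\<lambda>q. meetV (lab pi0) (lab q) = 5) L" by code_simp
lemma C3c: "N0V = map lab N0" by code_simp
lemma C3d: "T5V = map lab T5" by code_simp
lemma C3e: "length N0 = 36" "length T5 = 27" "length L = 280" by code_simp+
lemma C4a: "set (concat G) = set N0" by code_simp
lemma C4b: "length G = 12" by code_simp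
lemma C4c: "\<forall>t\<in>set G. \<forall>a\<in>set t. \<forall>b\<in>set t. a \<noteq> b \<longrightarrow> meetV (lab a) (lab b) = 9" by code_simp
lemma C4d: "cntV T5V (lab pi0) = 0" by code_simp
lemma C5: "\<forall>s\<in>set L. let l = lab s in s = pi0 \<or> meetV (lab pi0) l = 9 \<or> (meetV (lab pi0) l = 5 \<and> cntV N0V l = 12 \<and> cntV T5V l = 0)
  \<or> (meetV (lab pi0) l = 6 \<and> cntV N0V l = 4 \<and> cntV T5V l = 0) \<or> (meetV (lab pi0) l = 7 \<and> cntV N0V l = 4 \<and> cntV T5V l = 4)" by code_simp


definition cellof :: "'a set set \<Rightarrow> 'a \<Rightarrow> 'a set" where
  "cellof P x = (THE c. c \<in> P \<and> x \<in> c)"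

lemma cellof_eq:
  assumes "is_partition X P" "c \<in> P" "x \<in> c" shows "cellof P x = c"
  unfolding cellof_def
proof (rule the_equality)
  show "c \<in> P \<and> x \<in> c" using assms by simp
  fix d assume "d \<in> P \<and> x \<in> d"
  then show "d = c" using assms unfolding is_partition_def by blast
qed

lemma cellof_in:
  assumes "is_partition X P" "x \<in> X" shows "cellof P x \<in> P" "x \<in> cellof P x"
proof -
  obtain c where "c \<in> P" "x \<in> c" using assms unfolding is_partition_def by blast
  then show "cellof P x \<in> P" "x \<in> cellof P x" using cellof_eq[OF assms(1)] by auto
qed

lemma card_meet_image:
  assumes P: "is_partition X P" and Q: "is_partition X Q"
  shows "card (meet P Q) = card ((\<lambda>x. (cellof P x, cellof Q x)) ` X)"
proof -
  let ?f = "\<lambda>x. (cellof P x, cellof Q x)"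
  let ?g = "\<lambda>(c,d). c \<inter> d"
  have eq: "meet P Q = ?g ` (?f ` X)"
  proof
    show "meet P Q \<subseteq> ?g ` (?f ` X)"
    proof
      fix m assume "m \<in> meet P Q"
      then obtain c d where cd: "c \<in> P" "d \<in> Q" "c \<inter> d \<noteq> {}" "m = c \<inter> d" unfolding meet_def by blast
      then obtain x where x: "x \<in> c" "x \<in> d" by blast
      have "x \<in> X" using P cd x unfolding is_partition_def by blast
      moreover have "?f x = (c,d)" using cellof_eq[OF P cd(1) x(1)] cellof_eq[OF Q cd(2) x(2)] by simp
      ultimately show "m \<in> ?g ` (?f ` X)" using cd(4) by force
    qed
    show "?g ` (?f ` X) \<subseteq> meet P Q"
    proof
      fix m assume "m \<in> ?g ` (?f ` X)"
      then obtain x where x: "x \<in> X" "m = cellof P x \<inter> cellof Q x" by auto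
      then show "m \<in> meet P Q" unfolding meet_def using cellof_in[OF P x(1)] cellof_in[OF Q x(1)] by blast
    qed
  qed
  have inj: "inj_on ?g (?f ` X)"
  proof (rule inj_onI)
    fix u v assume u: "u \<in> ?f ` X" and v: "v \<in> ?f ` X" and e: "?g u = ?g v"
    from u obtain x where x: "x \<in> X" "u = ?f x" by auto
    from v obtain y where y: "y \<in> X" "v = ?f y" by auto
    have "x \<in> cellof P y \<inter> cellof Q y" using e x y cellof_in[OF P x(1)] cellof_in[OF Q x(1)] by auto
    then have "cellof P x = cellof P y" "cellof Q x = cellof Q y"
      using cellof_eq[OF P cellof_in(1)[OF P y(1)]] cellof_eq[OF Q cellof_in(1)[OF Q y(1)]] by auto
    then show "u = v" using x y by simp
  qed
  show ?thesis using eq card_image[OF inj] by simp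
qed

lemma card_image_cong:
  assumes "\<And>x y. x \<in> X \<Longrightarrow> y \<in> X \<Longrightarrow> f x = f y \<longleftrightarrow> g x = g y"
  shows "card (f ` X) = card (g ` X)"
proof -
  define h where "h a = g (SOME x. x \<in> X \<and> f x = a)" for a
  have hx: "h (f x) = g x" if "x \<in> X" for x
  proof -
    have "\<exists>z. z \<in> X \<and> f z = f x" using that by blast
    then have "(SOME z. z \<in> X \<and> f z = f x) \<in> X \<and> f (SOME z. z \<in> X \<and> f z = f x) = f x" by (rule someI_ex)
    then show ?thesis unfolding h_def using assms that by blast
  qed
  have e: "g ` X = h ` (f ` X)" using hx by (force simp: image_image)
  have "inj_on h (f ` X)" using hx assms by (auto simp: inj_on_def)
  then show ?thesis using e card_image by metis
qed

lemma adj_iff_meet9: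
  assumes P: "P \<in> P33" and Q: "Q \<in> P33"
  shows "adj33 P Q \<longleftrightarrow> card (meet P Q) = 9"
proof -
  let ?X = "{1..9::nat}"
  let ?f = "\<lambda>x. (cellof P x, cellof Q x)"
  have pP: "is_partition ?X P" "card P = 3" and pQ: "is_partition ?X Q" "card Q = 3"
    using P Q unfolding P33_def by auto
  have cm: "card (meet P Q) = card (?f ` ?X)" by (rule card_meet_image[OF pP(1) pQ(1)])
  have sub: "?f ` ?X \<subseteq> P \<times> Q" using cellof_in(1)[OF pP(1)] cellof_in(1)[OF pQ(1)] by auto
  have fin: "finite P" "finite Q" using pP(2) pQ(2) by (auto intro: card_ge_0_finite)
  have cPQ: "card (P \<times> Q) = 9" using pP(2) pQ(2) by (simp add: card_cartesian_product)
  have cX: "card ?X = 9" by simp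
  show ?thesis
  proof
    assume adj: "adj33 P Q"
    have "inj_on ?f ?X"
    proof (rule inj_onI)
      fix x y assume x: "x \<in> ?X" and y: "y \<in> ?X" and e: "?f x = ?f y"
      have c: "cellof P x \<in> P" "cellof Q x \<in> Q" using cellof_in[OF pP(1) x] cellof_in[OF pQ(1) x] by auto
      have "x \<in> cellof P x \<inter> cellof Q x" "y \<in> cellof P x \<inter> cellof Q x"
        using cellof_in[OF pP(1) x] cellof_in[OF pQ(1) x] cellof_in[OF pP(1) y] cellof_in[OF pQ(1) y] e by auto
      moreover have "card (cellof P x \<inter> cellof Q x) = 1" using adj c unfolding adj33_def by blast
      ultimately show "x = y" by (metis card_1_singletonE singletonD)
    qed
    then show "card (meet P Q) = 9" using cm cX by (simp add: card_image)
  next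
    assume "card (meet P Q) = 9"
    then have c9: "card (?f ` ?X) = 9" using cm by simp
    have img: "?f ` ?X = P \<times> Q" using card_subset_eq[OF _ sub] fin c9 cPQ by simp
    have inj: "inj_on ?f ?X" using c9 cX inj_on_iff_eq_card[of ?X ?f] by simp
    have one: "card (c \<inter> d) = 1" if c: "c \<in> P" and d: "d \<in> Q" for c d
    proof -
      obtain x where x: "x \<in> ?X" "?f x = (c,d)" using img c d by (metis (no_types, lifting) SigmaI imageE)
      have "x \<in> c" "x \<in> d" using x cellof_in[OF pP(1) x(1)] cellof_in[OF pQ(1) x(1)] by auto
      have "c \<inter> d = {x}"
      proof
        show "{x} \<subseteq> c \<inter> d" using \<open>x \<in> c\<close> \<open>x \<in> d\<close> by simp
        show "c \<inter> d \<subseteq> {x}"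
        proof
          fix y assume y: "y \<in> c \<inter> d"
          have yX: "y \<in> ?X" using y c pP(1) unfolding is_partition_def by blast
          have "?f y = (c,d)" using cellof_eq[OF pP(1) c] cellof_eq[OF pQ(1) d] y by auto
          then show "y \<in> {x}" using inj x yX unfolding inj_on_def by auto
        qed
      qed
      then show ?thesis by simp
    qed
    show "adj33 P Q" unfolding adj33_def using one by (metis Int_commute)
  qed
qed

lemma validL_form:
  assumes "validL p" obtains c0 c1 c2 where "p = [c0,c1,c2]"
  using assms unfolding validL_def by (auto simp: numeral_3_eq_3 length_Suc_conv)

lemma set_upt_10: "set [1..<10] = {1..9::nat}" by auto

lemma valid3:
  assumes "validL [c0,c1,c2]"
  shows "length c0 = 3" "length c1 = 3" "length c2 = 3" "distinct c0" "distinct c1" "distinct c2"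
    "set c0 \<inter> set c1 = {}" "set c0 \<inter> set c2 = {}" "set c1 \<inter> set c2 = {}"
    "set c0 \<union> set c1 \<union> set c2 = {1..9}"
proof -
  have "set (concat [c0,c1,c2]) = {1..9}" using assms unfolding validL_def set_upt_10 by simp
  then show "set c0 \<union> set c1 \<union> set c2 = {1..9}" by auto
  show "length c0 = 3" "length c1 = 3" "length c2 = 3" "distinct c0" "distinct c1" "distinct c2"
    "set c0 \<inter> set c1 = {}" "set c0 \<inter> set c2 = {}" "set c1 \<inter> set c2 = {}"
    using assms unfolding validL_def by auto
qed

lemma valid_part:
  assumes "validL p" shows "part_of p \<in> P33"
proof -
  obtain c0 c1 c2 where p: "p = [c0,c1,c2]" using assms validL_form by blast
  note v = valid3[OF assms[unfolded p]]
  have ne: "set c0 \<noteq> {}" "set c1 \<noteq> {}" "set c2 \<noteq> {}" using v(1-3) by auto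
  have cards: "card (set c0) = 3" "card (set c1) = 3" "card (set c2) = 3"
    using v(1-6) by (auto simp: distinct_card)
  have d: "set c0 \<noteq> set c1" "set c0 \<noteq> set c2" "set c1 \<noteq> set c2" using ne v(7-9) by auto
  have po: "part_of p = {set c0, set c1, set c2}" unfolding part_of_def p by auto
  show ?thesis unfolding P33_def is_partition_def po
    using v(7-10) ne cards d by (auto simp: card_insert_if)
qed

lemma idx3:
  "x \<in> set c0 \<Longrightarrow> idx [c0,c1,c2] x = 0"
  "x \<notin> set c0 \<Longrightarrow> x \<in> set c1 \<Longrightarrow> idx [c0,c1,c2] x = 1"
  "x \<notin> set c0 \<Longrightarrow> x \<notin> set c1 \<Longrightarrow> x \<in> set c2 \<Longrightarrow> idx [c0,c1,c2] x = 2"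
  by (auto simp: idx_def)

lemma valid_idx:
  assumes "validL p" "x \<in> {1..9}"
  shows "idx p x < 3" "x \<in> set (p ! idx p x)" "cellof (part_of p) x = set (p ! idx p x)"
proof -
  obtain c0 c1 c2 where p: "p = [c0,c1,c2]" using assms validL_form by blast
  note v = valid3[OF assms(1)[unfolded p]]
  have xin: "x \<in> set c0 \<or> x \<in> set c1 \<or> x \<in> set c2" using v(10) assms(2) by blast
  have "(idx p x = 0 \<and> x \<in> set c0) \<or> (idx p x = 1 \<and> x \<in> set c1) \<or> (idx p x = 2 \<and> x \<in> set c2)"
  proof (cases "x \<in> set c0")
    case True then show ?thesis using idx3(1)[of x c0 c1 c2] p by simp
  next
    case F0: False
    show ?thesis
    proof (cases "x \<in> set c1")
      case True then show ?thesis using idx3(2)[of x c0 c1 c2] F0 p by simp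
    next
      case False then show ?thesis using idx3(3)[of x c0 c1 c2] F0 xin p by simp
    qed
  qed
  then have "idx p x < 3 \<and> x \<in> set (p ! idx p x)" unfolding p by auto
  then show "idx p x < 3" "x \<in> set (p ! idx p x)" by auto
  have pp: "is_partition {1..9} (part_of p)" using valid_part[OF assms(1)] unfolding P33_def by auto
  have "set (p ! idx p x) \<in> part_of p" using \<open>idx p x < 3 \<and> _\<close> unfolding part_of_def p
    by (auto simp: less_Suc_eq numeral_3_eq_3)
  then show "cellof (part_of p) x = set (p ! idx p x)"
    using cellof_eq[OF pp] \<open>idx p x < 3 \<and> _\<close> by blast
qed

lemma valid_inj_idx:
  assumes "validL p" "i < 3" "j < 3" "set (p ! i) = set (p ! j)" shows "i = j"
proof -
  obtain c0 c1 c2 where p: "p = [c0,c1,c2]" using assms validL_form by blast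
  note v = valid3[OF assms(1)[unfolded p]]
  have ne: "set c0 \<noteq> {}" "set c1 \<noteq> {}" "set c2 \<noteq> {}" using v(1-3) by auto
  have "i = 0 \<or> i = 1 \<or> i = 2" "j = 0 \<or> j = 1 \<or> j = 2" using assms(2,3) by auto
  then show ?thesis using assms(4) ne v(7-9) unfolding p by auto
qed

lemma meet_lab:
  assumes vp: "validL p" and vq: "validL q"
  shows "card (meet (part_of p) (part_of q)) = meetV (lab p) (lab q)"
proof -
  let ?X = "{1..9::nat}"
  have pp: "is_partition ?X (part_of p)" using valid_part[OF vp] unfolding P33_def by auto
  have pq: "is_partition ?X (part_of q)" using valid_part[OF vq] unfolding P33_def by auto
  have "card (meet (part_of p) (part_of q)) = card ((\<lambda>x. (cellof (part_of p) x, cellof (part_of q) x)) ` ?X)"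
    by (rule card_meet_image[OF pp pq])
  also have "\<dots> = card ((\<lambda>x. 3 * idx p x + idx q x) ` ?X)"
  proof (rule card_image_cong)
    fix x y assume x: "x \<in> ?X" and y: "y \<in> ?X"
    have a: "cellof (part_of p) x = cellof (part_of p) y \<longleftrightarrow> idx p x = idx p y"
      using valid_idx[OF vp x] valid_idx[OF vp y] valid_inj_idx[OF vp] by metis
    have b: "cellof (part_of q) x = cellof (part_of q) y \<longleftrightarrow> idx q x = idx q y"
      using valid_idx[OF vq x] valid_idx[OF vq y] valid_inj_idx[OF vq] by metis
    have c: "3 * idx p x + idx q x = 3 * idx p y + idx q y \<longleftrightarrow> idx p x = idx p y \<and> idx q x = idx q y"
      using valid_idx(1)[OF vq x] valid_idx(1)[OF vq y] by arith
    show "(cellof (part_of p) x, cellof (part_of q) x) = (cellof (part_of p) y, cellof (part_of q) y) \<longleftrightarrow>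
          3 * idx p x + idx q x = 3 * idx p y + idx q y" using a b c by simp
  qed
  also have "\<dots> = meetV (lab p) (lab q)"
  proof -
    have "map2 (\<lambda>a b. 3*a+b) (lab p) (lab q) = map (\<lambda>x. 3 * idx p x + idx q x) [1..<10]"
      unfolding lab_def by (simp add: zip_map_map zip_same_conv_map del: upt_Suc)
    then show ?thesis unfolding meetV_def length_remdups_card_conv by (simp only: set_map set_upt_10)
  qed
  finally show ?thesis .
qed

lemma adj_lab:
  assumes vp: "validL p" and vq: "validL q"
  shows "adj33 (part_of p) (part_of q) \<longleftrightarrow> meetV (lab p) (lab q) = 9"
  using adj_iff_meet9[OF valid_part[OF vp] valid_part[OF vq]] meet_lab[OF vp vq] by simp

section \<open>Enumeration of P33\<close>

lemma choose2_complete: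
  "distinct r \<Longrightarrow> A \<subseteq> set r \<Longrightarrow> card A = 2 \<Longrightarrow> \<exists>s\<in>set (choose2 r). set s = A"
proof (induction r arbitrary: A)
  case Nil
  then show ?case by simp
next
  case (Cons a r)
  obtain x y where A: "A = {x,y}" "x \<noteq> y" using Cons.prems(3) unfolding card_2_iff by blast
  show ?case
  proof (cases "a \<in> A")
    case True
    define b where "b = (if a = x then y else x)"
    have b: "A = {a,b}" "a \<noteq> b" using A True unfolding b_def by auto
    then have br: "b \<in> set r" using Cons.prems(2) by auto
    have "[a,b] \<in> set (choose2 (a#r))" using br by simp
    moreover have "set [a,b] = A" using b by simp
    ultimately show ?thesis by blast
  next
    case False
    then have Ar: "A \<subseteq> set r" using Cons.prems(2) by auto
    have dr: "distinct r" using Cons.prems(1) by simp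
    obtain s where s: "s \<in> set (choose2 r)" "set s = A" using Cons.IH[OF dr Ar Cons.prems(3)] by blast
    have "s \<in> set (choose2 (a#r))" using s(1) by simp
    then show ?thesis using s(2) by blast
  qed
qed

definition PT :: "nat set \<Rightarrow> nat set set set" where
  "PT X = {P. is_partition X P \<and> (\<forall>c\<in>P. card c = 3)}"

lemma part_of_Cons: "part_of (c # p) = insert (set c) (part_of p)"
  unfolding part_of_def by simp

lemma concat_map_mem: "x \<in> set (f a) \<Longrightarrow> a \<in> set xs \<Longrightarrow> x \<in> set (concat (map f xs))"
  by auto

lemma PT_complete:
  "distinct xs \<Longrightarrow> P \<in> PT (set xs) \<Longrightarrow> P \<in> part_of ` set (parts xs)"
proof (induction xs arbitrary: P rule: parts.induct)
  case 1
  then have "P = {}" unfolding PT_def is_partition_def by auto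
  then show ?case by (simp add: part_of_def)
next
  case (2 m r)
  have pP: "is_partition (insert m (set r)) P" and c3: "\<forall>c\<in>P. card c = 3"
    using "2.prems"(2) unfolding PT_def by auto
  have UP: "\<Union>P = insert m (set r)" using pP unfolding is_partition_def by simp
  have disj: "c \<inter> d = {}" if "c \<in> P" "d \<in> P" "c \<noteq> d" for c d
    using pP that unfolding is_partition_def by blast
  have ne: "c \<noteq> {}" if "c \<in> P" for c using pP that unfolding is_partition_def by blast
  have "m \<in> \<Union>P" unfolding UP by simp
  then obtain c where c: "c \<in> P" "m \<in> c" by (rule UnionE)
  have csub: "c \<subseteq> insert m (set r)" using c(1) UP by (metis Union_upper)
  have mr: "m \<notin> set r" "distinct r" using "2.prems"(1) by simp_all
  have "card c = 3" using c3 c(1) by blast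
  then have fc: "finite c" by (simp add: card_ge_0_finite)
  let ?A = "c - {m}"
  have cA: "card ?A = 2" using \<open>card c = 3\<close> c(2) fc by (simp add: card_Diff_singleton)
  have Asub: "?A \<subseteq> set r" using csub by blast
  obtain s where s: "s \<in> set (choose2 r)" "set s = ?A" using choose2_complete[OF mr(2) Asub cA] by blast
  let ?r' = "filter (\<lambda>x. x \<notin> set s) r"
  let ?P' = "P - {c}"
  have dr': "distinct ?r'" using mr(2) by simp
  have setr': "set ?r' = insert m (set r) - c"
  proof -
    have "set ?r' = set r - set s" by auto
    also have "\<dots> = set r - c" using s(2) mr(1) by blast
    also have "\<dots> = insert m (set r) - c" using c(2) by blast
    finally show ?thesis .
  qed
  have UP': "\<Union>?P' = set ?r'"
  proof
    show "\<Union>?P' \<subseteq> set ?r'"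
    proof
      fix x assume "x \<in> \<Union>?P'"
      then obtain d where d: "d \<in> P" "d \<noteq> c" "x \<in> d" by blast
      have "d \<inter> c = {}" using disj[OF d(1) c(1) d(2)] .
      moreover have "x \<in> insert m (set r)" using d(1) d(3) UP by blast
      ultimately show "x \<in> set ?r'" unfolding setr' using d(3) by blast
    qed
    show "set ?r' \<subseteq> \<Union>?P'"
    proof
      fix x assume "x \<in> set ?r'"
      then have x: "x \<in> insert m (set r)" "x \<notin> c" unfolding setr' by auto
      then obtain d where d: "d \<in> P" "x \<in> d" using UP by blast
      then have "d \<noteq> c" using x(2) by blast
      then show "x \<in> \<Union>?P'" using d by blast
    qed
  qed
  have "is_partition (set ?r') ?P'"
    unfolding is_partition_def using UP' ne disj by blast
  then have "?P' \<in> PT (set ?r')" using c3 unfolding PT_def by blast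
  then have "?P' \<in> part_of ` set (parts ?r')" by (rule "2.IH"[OF s(1) dr'])
  then obtain p' where p': "p' \<in> set (parts ?r')" "part_of p' = ?P'" by (rule imageE) simp
  have mem: "(m#s)#p' \<in> set (parts (m#r))"
  proof -
    have "(m#s)#p' \<in> set (map (\<lambda>p. (m#s)#p) (parts ?r'))" using p'(1) by simp
    then show ?thesis using s(1) unfolding parts.simps(2) by (rule concat_map_mem)
  qed
  have eq: "part_of ((m#s)#p') = P"
  proof -
    have "set (m#s) = c" using s(2) c(2) by auto
    then show ?thesis unfolding part_of_Cons p'(2) using c(1) by auto
  qed
  show ?case
  proof (rule image_eqI)
    show "P = part_of ((m#s)#p')" using eq by simp
    show "(m#s)#p' \<in> set (parts (m#r))" by (rule mem)
  qed
qed

lemma P33_sub_L: "P33 \<subseteq> part_of ` set L"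
proof
  fix P assume "P \<in> P33"
  then have "P \<in> PT (set [1..<10])" unfolding P33_def PT_def set_upt_10 by auto
  then show "P \<in> part_of ` set L" unfolding L_def by (rule PT_complete[rotated]) simp
qed

lemma P33_eq: "P33 = part_of ` set L"
  using P33_sub_L valid_part C1 by blast

lemma lexlt_irrefl: "\<not> lexlt xs xs"
  by (induction xs) auto

lemma lexlt_trans: "lexlt xs ys \<Longrightarrow> lexlt ys zs \<Longrightarrow> lexlt xs zs"
proof (induction xs arbitrary: ys zs)
  case Nil
  then show ?case by (cases ys; cases zs) auto
next
  case (Cons a as)
  then show ?case by (cases ys; cases zs) auto
qed

lemma sorted_wrt_irrefl_distinct: "sorted_wrt R xs \<Longrightarrow> (\<And>x. \<not> R x x) \<Longrightarrow> distinct xs"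
  by (induction xs) auto

lemma distinct_keyL: "distinct (map keyL L)"
proof -
  have "transp lexlt" unfolding transp_def using lexlt_trans by blast
  then have "sorted_wrt lexlt (map keyL L)" using C2 successively_conv_sorted_wrt by blast
  then show ?thesis using sorted_wrt_irrefl_distinct lexlt_irrefl by blast
qed

definition kappa :: "nat set set \<Rightarrow> nat list" where
  "kappa P = concat (map (\<lambda>x. sorted_list_of_set (cellof P x)) [1..<10])"

lemma kappa_keyL:
  assumes v: "validL p" shows "kappa (part_of p) = keyL p"
proof -
  have "sorted_list_of_set (cellof (part_of p) x) = sort (p ! idx p x)" if "x \<in> set [1..<10]" for x
  proof -
    have x: "x \<in> {1..9}" using that set_upt_10 by blast
    obtain c0 c1 c2 where p: "p = [c0,c1,c2]" using v validL_form by blast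
    have "distinct (p ! idx p x)" using valid_idx(1)[OF v x] valid3(4-6)[OF v[unfolded p]] unfolding p
      by (auto simp: less_Suc_eq numeral_3_eq_3)
    then show ?thesis using valid_idx(3)[OF v x] by (simp add: sorted_list_of_set_sort_remdups distinct_remdups_id)
  qed
  then show ?thesis unfolding kappa_def keyL_def by (metis (mono_tags, lifting) map_eq_conv)
qed

lemma distinct_L: "distinct L"
  using distinct_keyL by (simp add: distinct_map)

lemma inj_part_of: "inj_on part_of (set L)"
proof (rule inj_onI)
  fix p q assume p: "p \<in> set L" and q: "q \<in> set L" and e: "part_of p = part_of q"
  have "keyL p = keyL q" using kappa_keyL C1 p q e by metis
  then show "p = q" using distinct_keyL p q by (simp add: distinct_map inj_on_def)
qed

lemma card_filter_L:
  assumes "set xs \<subseteq> set L" "distinct xs"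
  shows "card (part_of ` set xs) = length xs"
  using card_image[OF inj_on_subset[OF inj_part_of assms(1)]] assms(2) by (simp add: distinct_card)

section \<open>Relabelling the ground set\<close>

definition pmap :: "(nat \<Rightarrow> nat) \<Rightarrow> nat set set \<Rightarrow> nat set set" where
  "pmap g P = (`) g ` P"

definition perm9 :: "(nat \<Rightarrow> nat) \<Rightarrow> bool" where
  "perm9 g \<longleftrightarrow> bij g \<and> g ` {1..9} = {1..9}"

lemma pmap_inv: "bij g \<Longrightarrow> pmap (inv g) (pmap g P) = P"
  unfolding pmap_def image_image by (simp add: image_inv_f_f bij_is_inj)

lemma inj_pmap: "bij g \<Longrightarrow> inj (pmap g)"
  by (rule inj_on_inverseI[where g = "pmap (inv g)"]) (rule pmap_inv)

lemma perm9_inv: assumes "perm9 g" shows "perm9 (inv g)"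
proof -
  have b: "bij g" and i: "g ` {1..9} = {1..9}" using assms unfolding perm9_def by auto
  have "inv g ` {1..9} = inv g ` (g ` {1..9})" using i by simp
  also have "\<dots> = {1..9}" by (simp add: image_inv_f_f bij_is_inj[OF b])
  finally show ?thesis unfolding perm9_def using bij_imp_bij_inv[OF b] by simp
qed

lemma pmap_P33: assumes g: "perm9 g" and P: "P \<in> P33" shows "pmap g P \<in> P33"
proof -
  have b: "bij g" and i: "g ` {1..9} = {1..9}" using g unfolding perm9_def by auto
  have inj: "inj g" using b bij_is_inj by blast
  have pP: "is_partition {1..9} P" "card P = 3" "\<forall>c\<in>P. card c = 3" using P unfolding P33_def by auto
  have U: "\<Union>(pmap g P) = {1..9}"
  proof -
    have "\<Union>(pmap g P) = g ` \<Union>P" unfolding pmap_def image_Union by simp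
    also have "\<dots> = {1..9}" using pP(1) i unfolding is_partition_def by simp
    finally show ?thesis .
  qed
  have ne: "\<forall>c\<in>pmap g P. c \<noteq> {}" using pP(1) unfolding is_partition_def pmap_def by auto
  have dj: "\<forall>c\<in>pmap g P. \<forall>d\<in>pmap g P. c \<noteq> d \<longrightarrow> c \<inter> d = {}"
  proof (intro ballI impI)
    fix c' d' assume c': "c' \<in> pmap g P" and d': "d' \<in> pmap g P" and ne': "c' \<noteq> d'"
    obtain c where c: "c \<in> P" "c' = g ` c" using c' unfolding pmap_def by auto
    obtain d where d: "d \<in> P" "d' = g ` d" using d' unfolding pmap_def by auto
    have "c \<noteq> d" using ne' c d by auto
    then have "c \<inter> d = {}" using pP(1) c(1) d(1) unfolding is_partition_def by blast
    then show "c' \<inter> d' = {}" using c d image_Int[OF inj, of c d] by simp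
  qed
  have injP: "inj_on ((`) g) P" using inj by (simp add: inj_on_def inj_image_eq_iff)
  have cP: "card (pmap g P) = 3" unfolding pmap_def using card_image[OF injP] pP(2) by simp
  have cc: "\<forall>c\<in>pmap g P. card c = 3"
    using pP(3) unfolding pmap_def by (auto simp: card_image inj_on_subset[OF inj])
  show ?thesis unfolding P33_def is_partition_def using U ne dj cP cc by blast
qed

lemma pmap_P33_iff: assumes g: "perm9 g" shows "pmap g P \<in> P33 \<longleftrightarrow> P \<in> P33"
proof
  assume "pmap g P \<in> P33"
  then have "pmap (inv g) (pmap g P) \<in> P33" using pmap_P33 perm9_inv[OF g] by blast
  then show "P \<in> P33" using pmap_inv g unfolding perm9_def by metis
next
  assume "P \<in> P33" then show "pmap g P \<in> P33" using pmap_P33 g by blast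
qed

lemma card_image_Int_inj: "inj g \<Longrightarrow> card (g ` c \<inter> g ` d) = card (c \<inter> d)"
  by (simp add: image_Int[symmetric] card_image inj_on_subset)

lemma pmap_adj: assumes "inj g" shows "adj33 (pmap g P) (pmap g Q) \<longleftrightarrow> adj33 P Q"
  unfolding adj33_def pmap_def using card_image_Int_inj[OF assms] by auto

lemma pmap_meet: assumes inj: "inj g" shows "meet (pmap g P) (pmap g Q) = pmap g (meet P Q)"
proof
  show "meet (pmap g P) (pmap g Q) \<subseteq> pmap g (meet P Q)"
  proof
    fix m assume "m \<in> meet (pmap g P) (pmap g Q)"
    then obtain c d where cd: "c \<in> P" "d \<in> Q" "g ` c \<inter> g ` d \<noteq> {}" "m = g ` c \<inter> g ` d"
      unfolding meet_def pmap_def by blast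
    then have "c \<inter> d \<noteq> {}" "m = g ` (c \<inter> d)" using image_Int[OF inj] by auto
    then show "m \<in> pmap g (meet P Q)" unfolding pmap_def meet_def using cd(1,2) by blast
  qed
  show "pmap g (meet P Q) \<subseteq> meet (pmap g P) (pmap g Q)"
  proof
    fix m assume "m \<in> pmap g (meet P Q)"
    then obtain c d where cd: "c \<in> P" "d \<in> Q" "c \<inter> d \<noteq> {}" "m = g ` (c \<inter> d)"
      unfolding meet_def pmap_def by blast
    then have "g ` c \<inter> g ` d \<noteq> {}" "m = g ` c \<inter> g ` d" using image_Int[OF inj] by auto
    then show "m \<in> meet (pmap g P) (pmap g Q)" unfolding pmap_def meet_def using cd(1,2) by blast
  qed
qed

lemma card_pmap: assumes "inj g" shows "card (pmap g M) = card M"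
proof -
  have "inj_on ((`) g) M" using assms by (simp add: inj_on_def inj_image_eq_iff)
  then show ?thesis unfolding pmap_def by (rule card_image)
qed

lemma card_meet_pmap: assumes "bij g"
  shows "card (meet (pmap g P) (pmap g Q)) = card (meet P Q)"
  unfolding pmap_meet[OF bij_is_inj[OF assms]] using card_pmap[OF bij_is_inj[OF assms]] by simp

lemma part_of_pi0: "part_of pi0 = {{1,2,3},{4,5,6},{7,8,9}}"
  unfolding part_of_def pi0_def by simp

lemma exists_perm:
  assumes P: "P \<in> P33" shows "\<exists>g. perm9 g \<and> pmap g P = part_of pi0"
proof -
  have pP: "is_partition {1..9} P" "card P = 3" "\<forall>c\<in>P. card c = 3" using P unfolding P33_def by auto
  obtain c1 c2 c3 where P3: "P = {c1,c2,c3}" "c1 \<noteq> c2" "c2 \<noteq> c3" "c1 \<noteq> c3"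
    using pP(2) unfolding card_3_iff by blast
  have cin: "c1 \<in> P" "c2 \<in> P" "c3 \<in> P" using P3 by auto
  have card_c: "card c1 = 3" "card c2 = 3" "card c3 = 3" using pP(3) cin by auto
  have fin: "finite c1" "finite c2" "finite c3" using card_c by (auto simp: card_ge_0_finite)
  have dj: "c1 \<inter> c2 = {}" "c1 \<inter> c3 = {}" "c2 \<inter> c3 = {}"
    using pP(1) cin P3(2-4) unfolding is_partition_def by blast+
  have Un: "c1 \<union> c2 \<union> c3 = {1..9}" using pP(1) P3(1) unfolding is_partition_def by auto
  define D1 where "D1 = {1,2,3::nat}"
  define D2 where "D2 = {4,5,6::nat}"
  define D3 where "D3 = {7,8,9::nat}"
  have cD: "card D1 = 3" "card D2 = 3" "card D3 = 3" unfolding D1_def D2_def D3_def by simp_all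
  have DUn: "D1 \<union> D2 \<union> D3 = {1..9}" unfolding D1_def D2_def D3_def by auto
  have Ddj: "D1 \<inter> D2 = {}" "(D1 \<union> D2) \<inter> D3 = {}" unfolding D1_def D2_def D3_def by auto
  obtain h1 where h1: "bij_betw h1 c1 D1" using finite_same_card_bij[of c1 D1] fin(1) cD(1) card_c(1) by (auto simp: D1_def)
  obtain h2 where h2: "bij_betw h2 c2 D2" using finite_same_card_bij[of c2 D2] fin(2) cD(2) card_c(2) by (auto simp: D2_def)
  obtain h3 where h3: "bij_betw h3 c3 D3" using finite_same_card_bij[of c3 D3] fin(3) cD(3) card_c(3) by (auto simp: D3_def)
  define h where "h x = (if x \<in> c1 then h1 x else if x \<in> c2 then h2 x else if x \<in> c3 then h3 x else x)" for x
  have b1: "bij_betw h c1 D1" using h1 by (rule bij_betw_cong[THEN iffD1, rotated]) (simp add: h_def)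
  have b2: "bij_betw h c2 D2" using h2 dj
    by (intro bij_betw_cong[THEN iffD1, OF _ h2]) (auto simp: h_def)
  have b3: "bij_betw h c3 D3" using h3 dj
    by (intro bij_betw_cong[THEN iffD1, OF _ h3]) (auto simp: h_def)
  have b4: "bij_betw h (- {1..9}) (- {1..9})"
  proof -
    have "bij_betw id (- {1..9::nat}) (- {1..9})" by simp
    moreover have "\<And>x. x \<in> - {1..9} \<Longrightarrow> h x = id x" using Un unfolding h_def by auto
    ultimately show ?thesis using bij_betw_cong by metis
  qed
  have b12: "bij_betw h (c1 \<union> c2) (D1 \<union> D2)" by (rule bij_betw_combine[OF b1 b2 Ddj(1)])
  have b123: "bij_betw h (c1 \<union> c2 \<union> c3) (D1 \<union> D2 \<union> D3)" by (rule bij_betw_combine[OF b12 b3 Ddj(2)])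
  then have b9: "bij_betw h {1..9} {1..9}" using Un DUn by simp
  have "bij_betw h ({1..9} \<union> - {1..9}) ({1..9} \<union> - {1..9})" by (rule bij_betw_combine[OF b9 b4]) simp
  then have bh: "bij h" by simp
  have i9: "h ` {1..9} = {1..9}" using b9 bij_betw_imp_surj_on by blast
  have "pmap h P = {h ` c1, h ` c2, h ` c3}" unfolding pmap_def P3(1) by simp
  also have "\<dots> = {D1, D2, D3}" using b1 b2 b3 bij_betw_imp_surj_on by metis
  also have "\<dots> = part_of pi0" unfolding part_of_pi0 D1_def D2_def D3_def by simp
  finally show ?thesis unfolding perm9_def using bh i9 by blast
qed

section \<open>Local structure at the base vertex\<close>

abbreviation p0 :: "nat set set" where "p0 \<equiv> part_of pi0"

lemma adj_sym: "adj33 P Q \<longleftrightarrow> adj33 Q P"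
  unfolding adj33_def by (auto simp: Int_commute)

lemma validL_L: "s \<in> set L \<Longrightarrow> validL s"
  using C1 by blast

lemma N0_sub: "set N0 \<subseteq> set L" "distinct N0"
  unfolding C3a using distinct_L by auto

lemma T5_sub: "set T5 \<subseteq> set L" "distinct T5"
  unfolding C3b using distinct_L by auto

lemma p0_P33: "p0 \<in> P33" using valid_part[OF C0(1)] .

lemma Nb0_eq: "{\<sigma>\<in>P33. adj33 p0 \<sigma>} = part_of ` set N0"
proof -
  have "{\<sigma>\<in>P33. adj33 p0 \<sigma>} = part_of ` {s\<in>set L. adj33 p0 (part_of s)}"
    unfolding P33_eq by auto
  also have "{s\<in>set L. adj33 p0 (part_of s)} = set N0"
    unfolding C3a using adj_lab[OF C0(1) validL_L] by auto
  finally show ?thesis .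
qed

lemma T5s_eq: "{\<sigma>\<in>P33. card (meet p0 \<sigma>) = 5} = part_of ` set T5"
proof -
  have "{\<sigma>\<in>P33. card (meet p0 \<sigma>) = 5} = part_of ` {s\<in>set L. card (meet p0 (part_of s)) = 5}"
    unfolding P33_eq by auto
  also have "{s\<in>set L. card (meet p0 (part_of s)) = 5} = set T5"
    unfolding C3b using meet_lab[OF C0(1) validL_L] by auto
  finally show ?thesis .
qed

lemma card_Nb0: "card {\<sigma>\<in>P33. adj33 p0 \<sigma>} = 36"
  unfolding Nb0_eq using card_filter_L[OF N0_sub] C3e(1) by simp

lemma card_T5s: "card {\<sigma>\<in>P33. card (meet p0 \<sigma>) = 5} = 27"
  unfolding T5s_eq using card_filter_L[OF T5_sub] C3e(2) by simp

lemma local_le12: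
  assumes ind: "independent33 S" shows "card {\<sigma>\<in>S. adj33 p0 \<sigma>} \<le> 12"
proof -
  have SP: "S \<subseteq> P33" using ind unfolding independent33_def by blast
  have sub: "{\<sigma>\<in>S. adj33 p0 \<sigma>} \<subseteq> (\<Union>t\<in>set G. S \<inter> part_of ` set t)"
  proof
    fix \<sigma> assume "\<sigma> \<in> {\<sigma>\<in>S. adj33 p0 \<sigma>}"
    then have s: "\<sigma> \<in> S" "\<sigma> \<in> part_of ` set N0" using SP Nb0_eq by auto
    then have "\<sigma> \<in> part_of ` set (concat G)" using C4a by simp
    then show "\<sigma> \<in> (\<Union>t\<in>set G. S \<inter> part_of ` set t)" using s(1) by auto
  qed
  have one: "card (S \<inter> part_of ` set t) \<le> 1" if t: "t \<in> set G" for t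
  proof -
    have tL: "set t \<subseteq> set L" using t C4a N0_sub(1) by auto
    have "\<forall>a1\<in>S \<inter> part_of ` set t. \<forall>a2\<in>S \<inter> part_of ` set t. a1 = a2"
    proof (intro ballI)
      fix a1 a2 assume a1: "a1 \<in> S \<inter> part_of ` set t" and a2: "a2 \<in> S \<inter> part_of ` set t"
      obtain a where a: "a \<in> set t" "a1 = part_of a" using a1 by auto
      obtain b where b: "b \<in> set t" "a2 = part_of b" using a2 by auto
      show "a1 = a2"
      proof (rule ccontr)
        assume "a1 \<noteq> a2"
        then have "a \<noteq> b" using a b by auto
        then have "meetV (lab a) (lab b) = 9" using C4c t a(1) b(1) by blast
        then have "adj33 a1 a2" using adj_lab[OF validL_L validL_L] a b tL by blast
        then show False using ind a1 a2 unfolding independent33_def by blast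
      qed
    qed
    then show ?thesis using card_le_Suc0_iff_eq[of "S \<inter> part_of ` set t"] by simp
  qed
  have "card {\<sigma>\<in>S. adj33 p0 \<sigma>} \<le> card (\<Union>t\<in>set G. S \<inter> part_of ` set t)"
    by (rule card_mono[OF _ sub]) simp
  also have "\<dots> \<le> (\<Sum>t\<in>set G. card (S \<inter> part_of ` set t))" by (rule card_UN_le) simp
  also have "\<dots> \<le> (\<Sum>t\<in>set G. 1)" by (rule sum_mono) (rule one)
  also have "\<dots> = card (set G)" by simp
  also have "\<dots> \<le> length G" by (rule card_length)
  finally show ?thesis using C4b by simp
qed

lemma image_Collect_inj:
  assumes "inj f" "\<And>x. x \<in> A \<Longrightarrow> Q (f x) \<longleftrightarrow> R x"
  shows "f ` {x\<in>A. R x} = {y\<in>f ` A. Q y}"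
  using assms by auto

lemma pmap_image_P33: assumes g: "perm9 g" shows "pmap g ` P33 = P33"
proof
  show "pmap g ` P33 \<subseteq> P33" using pmap_P33[OF g] by blast
  show "P33 \<subseteq> pmap g ` P33"
  proof
    fix \<sigma> assume s: "\<sigma> \<in> P33"
    have b: "bij g" using g unfolding perm9_def by blast
    have "pmap g (pmap (inv g) \<sigma>) = \<sigma>"
      using pmap_inv[OF bij_imp_bij_inv[OF b], of \<sigma>] inv_inv_eq[OF b] by simp
    moreover have "pmap (inv g) \<sigma> \<in> P33" using pmap_P33[OF perm9_inv[OF g] s] .
    ultimately show "\<sigma> \<in> pmap g ` P33" by (metis image_eqI)
  qed
qed

lemma indep_pmap: assumes g: "perm9 g" and ind: "independent33 S"
  shows "independent33 (pmap g ` S)"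
proof -
  have inj: "inj g" using g bij_is_inj unfolding perm9_def by blast
  have "pmap g ` S \<subseteq> P33" using ind pmap_P33[OF g] unfolding independent33_def by blast
  moreover have "\<forall>P\<in>pmap g ` S. \<forall>Q\<in>pmap g ` S. \<not> adj33 P Q"
    using ind pmap_adj[OF inj] unfolding independent33_def by auto
  ultimately show ?thesis unfolding independent33_def by blast
qed

lemma card_Nb: assumes t: "\<tau> \<in> P33" shows "card {\<sigma>\<in>P33. adj33 \<tau> \<sigma>} = 36"
proof -
  obtain g where g: "perm9 g" "pmap g \<tau> = p0" using exists_perm[OF t] by blast
  have b: "bij g" using g unfolding perm9_def by blast
  have "pmap g ` {\<sigma>\<in>P33. adj33 \<tau> \<sigma>} = {\<sigma>\<in>pmap g ` P33. adj33 p0 \<sigma>}"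
    by (rule image_Collect_inj[OF inj_pmap[OF b]]) (use pmap_adj[OF bij_is_inj[OF b]] g(2) in metis)
  then have "card {\<sigma>\<in>P33. adj33 \<tau> \<sigma>} = card {\<sigma>\<in>P33. adj33 p0 \<sigma>}"
    using pmap_image_P33[OF g(1)] card_image[OF inj_on_subset[OF inj_pmap[OF b]]] by (metis subset_UNIV)
  then show ?thesis using card_Nb0 by simp
qed

lemma le12: assumes t: "\<tau> \<in> P33" and ind: "independent33 S"
  shows "card {\<sigma>\<in>S. adj33 \<tau> \<sigma>} \<le> 12"
proof -
  obtain g where g: "perm9 g" "pmap g \<tau> = p0" using exists_perm[OF t] by blast
  have b: "bij g" using g unfolding perm9_def by blast
  have "pmap g ` {\<sigma>\<in>S. adj33 \<tau> \<sigma>} = {\<sigma>\<in>pmap g ` S. adj33 p0 \<sigma>}"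
    by (rule image_Collect_inj[OF inj_pmap[OF b]]) (use pmap_adj[OF bij_is_inj[OF b]] g(2) in metis)
  then have "card {\<sigma>\<in>S. adj33 \<tau> \<sigma>} = card {\<sigma>\<in>pmap g ` S. adj33 p0 \<sigma>}"
    using card_image[OF inj_on_subset[OF inj_pmap[OF b]]] by (metis subset_UNIV)
  then show ?thesis using local_le12[OF indep_pmap[OF g(1) ind]] by simp
qed

section \<open>Every vertex outside a maximum independent set has 12 neighbours in it\<close>

lemma double_count:
  assumes "finite A" "finite B"
  shows "(\<Sum>a\<in>A. card {b\<in>B. R a b}) = (\<Sum>b\<in>B. card {a\<in>A. R a b})"
proof -
  have c1: "card {b\<in>B. R a b} = (\<Sum>b\<in>B. if R a b then 1 else 0)" for a
    using sum.inter_filter[OF assms(2), of "\<lambda>_. 1::nat" "R a"] by simp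
  have c2: "card {a\<in>A. R a b} = (\<Sum>a\<in>A. if R a b then 1 else 0)" for b
    using sum.inter_filter[OF assms(1), of "\<lambda>_. 1::nat" "\<lambda>a. R a b"] by simp
  show ?thesis unfolding c1 c2 by (rule sum.swap)
qed

lemma finite_P33: "finite P33" unfolding P33_eq by simp

lemma card_P33: "card P33 = 280"
  unfolding P33_eq using card_filter_L[of L] distinct_L C3e(3) by simp

lemma twelve:
  assumes ind: "independent33 S" and cS: "card S = 70" and t: "\<tau> \<in> P33" "\<tau> \<notin> S"
  shows "card {\<sigma>\<in>S. adj33 \<tau> \<sigma>} = 12"
proof -
  have SP: "S \<subseteq> P33" using ind unfolding independent33_def by blast
  have fS: "finite S" using SP finite_P33 finite_subset by blast
  let ?f = "\<lambda>\<tau>. card {\<sigma>\<in>S. adj33 \<tau> \<sigma>}"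
  have "(\<Sum>\<tau>\<in>P33. ?f \<tau>) = (\<Sum>\<sigma>\<in>S. card {\<tau>\<in>P33. adj33 \<tau> \<sigma>})"
    by (rule double_count[OF finite_P33 fS])
  also have "\<dots> = (\<Sum>\<sigma>\<in>S. 36)"
  proof (rule sum.cong[OF refl])
    fix \<sigma> assume "\<sigma> \<in> S"
    then have "\<sigma> \<in> P33" using SP by blast
    moreover have "{\<tau>\<in>P33. adj33 \<tau> \<sigma>} = {\<tau>\<in>P33. adj33 \<sigma> \<tau>}" using adj_sym by blast
    ultimately show "card {\<tau>\<in>P33. adj33 \<tau> \<sigma>} = 36" using card_Nb by simp
  qed
  also have "\<dots> = 2520" using cS by simp
  finally have tot: "(\<Sum>\<tau>\<in>P33. ?f \<tau>) = 2520" .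
  have zero: "?f \<tau>' = 0" if "\<tau>' \<in> S" for \<tau>'
  proof -
    have "{\<sigma>\<in>S. adj33 \<tau>' \<sigma>} = {}" using ind that unfolding independent33_def by blast
    then show ?thesis by (metis card.empty)
  qed
  have "(\<Sum>\<tau>\<in>P33. ?f \<tau>) = (\<Sum>\<tau>\<in>S. ?f \<tau>) + (\<Sum>\<tau>\<in>P33 - S. ?f \<tau>)"
    using sum.subset_diff[OF SP finite_P33] by (simp add: add.commute)
  also have "(\<Sum>\<tau>\<in>S. ?f \<tau>) = 0" using zero by simp
  finally have "(\<Sum>\<tau>\<in>P33 - S. ?f \<tau>) = 2520" using tot by simp
  moreover have "card (P33 - S) = 210" using card_Diff_subset[OF fS SP] card_P33 cS by simp
  ultimately have eq: "(\<Sum>\<tau>\<in>P33 - S. ?f \<tau>) = (\<Sum>\<tau>\<in>P33 - S. 12)" by simp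
  show ?thesis
    by (rule sum_mono_inv[OF eq]) (use le12 ind t finite_P33 in auto)
qed

section \<open>Counting around the base vertex\<close>

lemma card_adj_filter:
  assumes W: "set W \<subseteq> set L" "distinct W" and s: "s \<in> set L"
  shows "card {\<tau>\<in>part_of ` set W. adj33 (part_of s) \<tau>} = length (filter (\<lambda>w. meetV (lab w) (lab s) = 9) W)"
proof -
  have eq: "{\<tau>\<in>part_of ` set W. adj33 (part_of s) \<tau>} = part_of ` set (filter (\<lambda>w. meetV (lab w) (lab s) = 9) W)"
  proof -
    have "adj33 (part_of s) (part_of w) \<longleftrightarrow> meetV (lab w) (lab s) = 9" if "w \<in> set W" for w
      using adj_sym adj_lab[OF validL_L validL_L] that W(1) s by blast
    then show ?thesis by auto
  qed
  have F1: "set (filter (\<lambda>w. meetV (lab w) (lab s) = 9) W) \<subseteq> set L" using W(1) by auto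
  have F2: "distinct (filter (\<lambda>w. meetV (lab w) (lab s) = 9) W)" using W(2) by simp
  show ?thesis unfolding eq by (rule card_filter_L[OF F1 F2])
qed

lemma classify:
  assumes "\<sigma> \<in> P33"
  shows "\<sigma> = p0 \<or> adj33 p0 \<sigma> \<or>
    (card (meet p0 \<sigma>) = 5 \<and> card {\<tau>\<in>P33. adj33 p0 \<tau> \<and> adj33 \<sigma> \<tau>} = 12 \<and> card {\<rho>\<in>P33. card (meet p0 \<rho>) = 5 \<and> adj33 \<sigma> \<rho>} = 0) \<or>
    (card (meet p0 \<sigma>) = 6 \<and> card {\<tau>\<in>P33. adj33 p0 \<tau> \<and> adj33 \<sigma> \<tau>} = 4 \<and> card {\<rho>\<in>P33. card (meet p0 \<rho>) = 5 \<and> adj33 \<sigma> \<rho>} = 0) \<or>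
    (card (meet p0 \<sigma>) = 7 \<and> card {\<tau>\<in>P33. adj33 p0 \<tau> \<and> adj33 \<sigma> \<tau>} = 4 \<and> card {\<rho>\<in>P33. card (meet p0 \<rho>) = 5 \<and> adj33 \<sigma> \<rho>} = 4)"
proof -
  obtain s where s: "s \<in> set L" "\<sigma> = part_of s" using assms P33_eq by blast
  have vs: "validL s" using validL_L[OF s(1)] .
  have m: "card (meet p0 \<sigma>) = meetV (lab pi0) (lab s)" using meet_lab[OF C0(1) vs] s(2) by simp
  have a: "adj33 p0 \<sigma> \<longleftrightarrow> meetV (lab pi0) (lab s) = 9" using adj_lab[OF C0(1) vs] s(2) by simp
  have cn: "card {\<tau>\<in>P33. adj33 p0 \<tau> \<and> adj33 \<sigma> \<tau>} = cntV N0V (lab s)"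
  proof -
    have "{\<tau>\<in>P33. adj33 p0 \<tau> \<and> adj33 \<sigma> \<tau>} = {\<tau>\<in>part_of ` set N0. adj33 (part_of s) \<tau>}"
    proof -
      have "{\<tau>\<in>P33. adj33 p0 \<tau> \<and> adj33 \<sigma> \<tau>} = {\<tau>\<in>{\<tau>\<in>P33. adj33 p0 \<tau>}. adj33 \<sigma> \<tau>}" by simp
      then show ?thesis unfolding Nb0_eq s(2) .
    qed
    then have "card {\<tau>\<in>P33. adj33 p0 \<tau> \<and> adj33 \<sigma> \<tau>} = length (filter (\<lambda>w. meetV (lab w) (lab s) = 9) N0)"
      using card_adj_filter[OF N0_sub s(1)] by simp
    also have "\<dots> = cntV N0V (lab s)" unfolding cntV_def C3c by (simp add: filter_map comp_def)
    finally show ?thesis .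
  qed
  have et: "card {\<rho>\<in>P33. card (meet p0 \<rho>) = 5 \<and> adj33 \<sigma> \<rho>} = cntV T5V (lab s)"
  proof -
    have "{\<rho>\<in>P33. card (meet p0 \<rho>) = 5 \<and> adj33 \<sigma> \<rho>} = {\<tau>\<in>part_of ` set T5. adj33 (part_of s) \<tau>}"
    proof -
      have "{\<rho>\<in>P33. card (meet p0 \<rho>) = 5 \<and> adj33 \<sigma> \<rho>} = {\<tau>\<in>{\<rho>\<in>P33. card (meet p0 \<rho>) = 5}. adj33 \<sigma> \<tau>}" by simp
      then show ?thesis unfolding T5s_eq s(2) .
    qed
    then have "card {\<rho>\<in>P33. card (meet p0 \<rho>) = 5 \<and> adj33 \<sigma> \<rho>} = length (filter (\<lambda>w. meetV (lab w) (lab s) = 9) T5)"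
      using card_adj_filter[OF T5_sub s(1)] by simp
    also have "\<dots> = cntV T5V (lab s)" unfolding cntV_def C3d by (simp add: filter_map comp_def)
    finally show ?thesis .
  qed
  have c5: "s = pi0 \<or> meetV (lab pi0) (lab s) = 9 \<or>
    (meetV (lab pi0) (lab s) = 5 \<and> cntV N0V (lab s) = 12 \<and> cntV T5V (lab s) = 0) \<or>
    (meetV (lab pi0) (lab s) = 6 \<and> cntV N0V (lab s) = 4 \<and> cntV T5V (lab s) = 0) \<or>
    (meetV (lab pi0) (lab s) = 7 \<and> cntV N0V (lab s) = 4 \<and> cntV T5V (lab s) = 4)"
    using C5 s(1) unfolding Let_def by blast
  show ?thesis unfolding m a cn et using c5 s(2) by blast
qed

lemma sum_ind: "finite A \<Longrightarrow> (\<Sum>x\<in>A. if P x then (c::nat) else 0) = c * card {x\<in>A. P x}"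
  using sum.inter_filter[of A "\<lambda>_. c" P] by (simp add: mult.commute)

lemma meet_p0_p0: "card (meet p0 p0) = 3"
  using meet_lab[OF C0(1) C0(1)] C0(2) by simp

lemma main_p0:
  assumes ind: "independent33 S" and cS: "card S = 70" and p: "p0 \<in> S"
  shows "card {\<sigma>\<in>S. card (meet p0 \<sigma>) = 7} = 36
       \<and> card {\<sigma>\<in>S. card (meet p0 \<sigma>) = 6} = 18
       \<and> card {\<sigma>\<in>S. card (meet p0 \<sigma>) = 5} = 15"
proof -
  have SP: "S \<subseteq> P33" using ind unfolding independent33_def by blast
  have fS: "finite S" using SP finite_P33 finite_subset by blast
  have nadj: "\<not> adj33 P Q" if "P \<in> S" "Q \<in> S" for P Q using ind that unfolding independent33_def by blast
  define Sm where "Sm = S - {p0}"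
  have fSm: "finite Sm" using fS unfolding Sm_def by simp
  have cSm: "card Sm = 69" using cS p fS unfolding Sm_def by (simp add: card_Diff_singleton)
  define mc where "mc \<sigma> = card (meet p0 \<sigma>)" for \<sigma>
  define cN where "cN \<sigma> = card {\<tau>\<in>P33. adj33 p0 \<tau> \<and> adj33 \<sigma> \<tau>}" for \<sigma>
  define eT where "eT \<sigma> = card {\<rho>\<in>P33. card (meet p0 \<rho>) = 5 \<and> adj33 \<sigma> \<rho>}" for \<sigma>
  have cls: "(mc \<sigma> = 5 \<and> cN \<sigma> = 12 \<and> eT \<sigma> = 0) \<or> (mc \<sigma> = 6 \<and> cN \<sigma> = 4 \<and> eT \<sigma> = 0) \<or> (mc \<sigma> = 7 \<and> cN \<sigma> = 4 \<and> eT \<sigma> = 4)"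
    if "\<sigma> \<in> Sm" for \<sigma>
  proof -
    have h1: "\<sigma> \<in> P33" using that SP unfolding Sm_def by blast
    have h2: "\<sigma> \<noteq> p0" using that unfolding Sm_def by blast
    have h3: "\<not> adj33 p0 \<sigma>" using that nadj p unfolding Sm_def by blast
    show ?thesis using classify[OF h1] h2 h3 unfolding mc_def cN_def eT_def by argo
  qed
  define n5 where "n5 = card {\<sigma>\<in>Sm. mc \<sigma> = 5}"
  define n6 where "n6 = card {\<sigma>\<in>Sm. mc \<sigma> = 6}"
  define n7 where "n7 = card {\<sigma>\<in>Sm. mc \<sigma> = 7}"
  have "69 = (\<Sum>\<sigma>\<in>Sm. (1::nat))" using cSm by simp
  also have "\<dots> = (\<Sum>\<sigma>\<in>Sm. (if mc \<sigma> = 5 then 1 else 0) + (if mc \<sigma> = 6 then 1 else 0) + (if mc \<sigma> = 7 then 1 else 0))"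
    by (rule sum.cong[OF refl]) (use cls in auto)
  also have "\<dots> = n5 + n6 + n7" unfolding sum.distrib sum_ind[OF fSm] n5_def n6_def n7_def by simp
  finally have tot: "n5 + n6 + n7 = 69" by simp
  define Nb0 where "Nb0 = {\<tau>\<in>P33. adj33 p0 \<tau>}"
  have fNb0: "finite Nb0" unfolding Nb0_def using finite_P33 by simp
  have "(\<Sum>\<sigma>\<in>Sm. cN \<sigma>) = (\<Sum>\<sigma>\<in>Sm. card {\<tau>\<in>Nb0. adj33 \<sigma> \<tau>})"
    unfolding cN_def Nb0_def by (rule sum.cong[OF refl]) (intro arg_cong[where f=card], blast)
  also have "\<dots> = (\<Sum>\<tau>\<in>Nb0. card {\<sigma>\<in>Sm. adj33 \<sigma> \<tau>})" by (rule double_count[OF fSm fNb0])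
  also have "\<dots> = (\<Sum>\<tau>\<in>Nb0. 11)"
  proof (rule sum.cong[OF refl])
    fix \<tau> assume t: "\<tau> \<in> Nb0"
    then have tP: "\<tau> \<in> P33" "adj33 p0 \<tau>" unfolding Nb0_def by auto
    have tS: "\<tau> \<notin> S" using tP(2) nadj p by blast
    have c12: "card {\<sigma>\<in>S. adj33 \<tau> \<sigma>} = 12" by (rule twelve[OF ind cS tP(1) tS])
    have sy: "adj33 \<sigma> \<tau> \<longleftrightarrow> adj33 \<tau> \<sigma>" for \<sigma> by (rule adj_sym)
    have eq: "{\<sigma>\<in>Sm. adj33 \<sigma> \<tau>} = {\<sigma>\<in>S. adj33 \<tau> \<sigma>} - {p0}" unfolding Sm_def sy by blast
    have "p0 \<in> {\<sigma>\<in>S. adj33 \<tau> \<sigma>}" using p tP(2) sy[of p0] by blast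
    then show "card {\<sigma>\<in>Sm. adj33 \<sigma> \<tau>} = 11" unfolding eq using c12 fS
      by (simp add: card_Diff_singleton)
  qed
  also have "\<dots> = 396" using card_Nb0 unfolding Nb0_def by simp
  finally have e1a: "(\<Sum>\<sigma>\<in>Sm. cN \<sigma>) = 396" .
  have "(\<Sum>\<sigma>\<in>Sm. cN \<sigma>) = (\<Sum>\<sigma>\<in>Sm. 4 + (if mc \<sigma> = 5 then 8 else 0))"
    by (rule sum.cong[OF refl]) (use cls in fastforce)
  also have "\<dots> = 4 * 69 + 8 * n5" unfolding sum.distrib sum_ind[OF fSm] n5_def using cSm by simp
  finally have n5: "n5 = 15" using e1a by simp
  define T5s where "T5s = {\<rho>\<in>P33. card (meet p0 \<rho>) = 5}"
  have fT5s: "finite T5s" unfolding T5s_def using finite_P33 by simp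
  have "(\<Sum>\<sigma>\<in>Sm. eT \<sigma>) = (\<Sum>\<sigma>\<in>Sm. card {\<rho>\<in>T5s. adj33 \<sigma> \<rho>})"
    unfolding eT_def T5s_def by (rule sum.cong[OF refl]) (intro arg_cong[where f=card], blast)
  also have "\<dots> = (\<Sum>\<rho>\<in>T5s. card {\<sigma>\<in>Sm. adj33 \<sigma> \<rho>})" by (rule double_count[OF fSm fT5s])
  also have "\<dots> = (\<Sum>\<rho>\<in>T5s. if \<rho> \<in> S then 0 else 12)"
  proof (rule sum.cong[OF refl])
    fix \<rho> assume r: "\<rho> \<in> T5s"
    then have rP: "\<rho> \<in> P33" "card (meet p0 \<rho>) = 5" unfolding T5s_def by auto
    have "\<not> adj33 p0 \<rho>" using rP adj_iff_meet9[OF p0_P33 rP(1)] by simp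
    have sy: "adj33 \<sigma> \<rho> \<longleftrightarrow> adj33 \<rho> \<sigma>" for \<sigma> by (rule adj_sym)
    have eq: "{\<sigma>\<in>Sm. adj33 \<sigma> \<rho>} = {\<sigma>\<in>S. adj33 \<rho> \<sigma>}" unfolding Sm_def sy
      using \<open>\<not> adj33 p0 \<rho>\<close> sy[of p0] by blast
    show "card {\<sigma>\<in>Sm. adj33 \<sigma> \<rho>} = (if \<rho> \<in> S then 0 else 12)"
    proof (cases "\<rho> \<in> S")
      case True
      then have "{\<sigma>\<in>S. adj33 \<rho> \<sigma>} = {}" using nadj by blast
      then show ?thesis using True unfolding eq by (metis card.empty)
    next
      case False
      then show ?thesis unfolding eq using twelve[OF ind cS rP(1) False] by simp
    qed
  qed
  also have "\<dots> = (\<Sum>\<rho>\<in>T5s. if \<rho> \<notin> S then 12 else 0)"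
    by (rule sum.cong[OF refl]) simp
  also have "\<dots> = 12 * card {\<rho>\<in>T5s. \<rho> \<notin> S}"
    by (rule sum_ind[OF fT5s])
  also have "\<dots> = 12 * (27 - n5)"
  proof -
    have i: "T5s \<inter> S = {\<sigma>\<in>Sm. mc \<sigma> = 5}"
      unfolding T5s_def Sm_def mc_def using SP meet_p0_p0 by auto
    have "{\<rho>\<in>T5s. \<rho> \<notin> S} = T5s - (T5s \<inter> S)" by blast
    then have "card {\<rho>\<in>T5s. \<rho> \<notin> S} = card T5s - card (T5s \<inter> S)"
      using card_Diff_subset[OF finite_subset[OF _ fT5s]] by (metis Int_lower1)
    then show ?thesis using i card_T5s unfolding T5s_def n5_def by simp
  qed
  finally have e2a: "(\<Sum>\<sigma>\<in>Sm. eT \<sigma>) = 12 * (27 - n5)" .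
  have "(\<Sum>\<sigma>\<in>Sm. eT \<sigma>) = (\<Sum>\<sigma>\<in>Sm. if mc \<sigma> = 7 then 4 else 0)"
    by (rule sum.cong[OF refl]) (use cls in fastforce)
  also have "\<dots> = 4 * n7" unfolding sum_ind[OF fSm] n7_def by simp
  finally have n7: "n7 = 36" using e2a n5 by simp
  have n6: "n6 = 18" using tot n5 n7 by simp
  have restr: "{\<sigma>\<in>S. card (meet p0 \<sigma>) = k} = {\<sigma>\<in>Sm. mc \<sigma> = k}" if "k \<noteq> 3" for k
    unfolding Sm_def mc_def using that meet_p0_p0 by auto
  show ?thesis using restr[of 5] restr[of 6] restr[of 7] n5 n6 n7 unfolding n5_def n6_def n7_def by simp
qed

theorem corollary5p2:
  fixes S :: "nat set set set" and \<pi> :: "nat set set"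
  assumes "independent33 S" and "card S = 70" and "\<pi> \<in> S"
  shows "card {\<sigma>\<in>S. card (meet \<pi> \<sigma>) = 7} = 36
       \<and> card {\<sigma>\<in>S. card (meet \<pi> \<sigma>) = 6} = 18
       \<and> card {\<sigma>\<in>S. card (meet \<pi> \<sigma>) = 5} = 15"
proof -
  have SP: "S \<subseteq> P33" using assms(1) unfolding independent33_def by blast
  have piP: "\<pi> \<in> P33" using SP assms(3) by blast
  obtain g where g: "perm9 g" "pmap g \<pi> = p0" using exists_perm[OF piP] by blast
  have b: "bij g" using g unfolding perm9_def by blast
  have inj: "inj (pmap g)" by (rule inj_pmap[OF b])
  have injS: "inj_on (pmap g) A" for A using inj_on_subset[OF inj subset_UNIV] .
  define S' where "S' = pmap g ` S"
  have ind': "independent33 S'" unfolding S'_def by (rule indep_pmap[OF g(1) assms(1)])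
  have cS': "card S' = 70" unfolding S'_def using card_image[OF injS] assms(2) by simp
  have p': "p0 \<in> S'" unfolding S'_def using assms(3) g(2) by blast
  have key: "card (meet p0 (pmap g \<sigma>)) = card (meet \<pi> \<sigma>)" for \<sigma>
    using card_meet_pmap[OF b, of \<pi> \<sigma>] g(2) by simp
  have tr: "card {\<sigma>\<in>S. card (meet \<pi> \<sigma>) = k} = card {\<sigma>\<in>S'. card (meet p0 \<sigma>) = k}" for k
  proof -
    have "pmap g ` {\<sigma>\<in>S. card (meet \<pi> \<sigma>) = k} = {\<sigma>\<in>S'. card (meet p0 \<sigma>) = k}"
      unfolding S'_def by (rule image_Collect_inj[OF inj]) (simp add: key)
    then have "card {\<sigma>\<in>S'. card (meet p0 \<sigma>) = k} = card (pmap g ` {\<sigma>\<in>S. card (meet \<pi> \<sigma>) = k})"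
      by (rule arg_cong[OF sym])
    also have "\<dots> = card {\<sigma>\<in>S. card (meet \<pi> \<sigma>) = k}" by (rule card_image[OF injS])
    finally show ?thesis by (rule sym)
  qed
  show ?thesis unfolding tr using main_p0[OF ind' cS' p'] .
qed

end
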